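(* In the setting below, for every $i\in\{1,\dots,2n+1\}$ we have $g_0g_ig_0^{-1}=g_1^{m_{i1}}g_2^{m_{i2}}\cdots g_{2n+1}^{m_{i,2n+1}}$. In particular $H_M$ is a normal subgroup of $G_M$.
   Context: Let $n\ge 1$ and let $M=(m_{ij})\in SL(2n+1,\mathbb Z)$. Assume that $M$ has exactly one real eigenvalue $\alpha$, that $\alpha>0$, $\alpha\neq 1$, that $\alpha$ is a simple eigenvalue, and that the remaining eigenvalues are $\beta_1,\dots,\beta_k,\bar\beta_1,\dots,\bar\beta_k$ with $\mathrm{Im}\,\beta_j>0$. Let $W\subset\mathbb C^{2n+1}$ be the direct sum of the generalized eigenspaces of $M$ for $\beta_1,\dots,\beta_k$ (so $\dim_{\mathbb C}W=n$). Fix a real eigenvector $a=(a^{(1)},\dots,a^{(2n+1)})^\top\in\mathbb R^{2n+1}$ of $M$ for $\alpha$ and a basis $b_1,\dots,b_n$ of $W$, $b_j=(b_j^{(1)},\dots,b_j^{(2n+1)})^\top$, and let $R=(r_{\ell j})\in M_n(\mathbb C)$ be given by $Mb_j=\sum_{\ell=1}^n r_{\ell j}b_\ell$. For $i=1,\dots,2n+1$ put $u_i=(a^{(i)},b_1^{(i)},\dots,b_n^{(i)})^\top\in\mathbb R\times\mathbb C^n$. Let $\mathbb H=\{w\in\mathbb C:\mathrm{Im}\,w>0\}$, and define holomorphic automorphisms of $\mathbb H\times\mathbb C^n$ by $g_0(w,z)=(\alpha w,R^\top z)$ and $g_i(w,z)=(w,z)+u_i$ for $1\le i\le 2n+1$.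 Let $G_M$ be the group generated by $g_0,\dots,g_{2n+1}$ and $H_M$ the subgroup generated by $g_1,\dots,g_{2n+1}$. *)

theory Defs
  imports "Jordan_Normal_Form.Char_Poly" "Jordan_Normal_Form.Determinant"
    "HOL-Algebra.Bij" "HOL-Algebra.Coset" "HOL-Algebra.Generated_Groups"
begin

definition gen_eigenspace :: "complex mat \<Rightarrow> complex \<Rightarrow> complex vec set" where
  "gen_eigenspace A lam = {v \<in> carrier_vec (dim_row A).
     \<exists>m. ((A - lam \<cdot>\<^sub>m 1\<^sub>m (dim_row A)) ^\<^sub>m m) *\<^sub>v v = 0\<^sub>v (dim_row A)}"

definition upper_gen_eigensum :: "complex mat \<Rightarrow> complex vec set" where
  "upper_gen_eigensum A =
     {v. \<exists>f. (\<forall>\<beta>. eigenvalue A \<beta> \<and> Im \<beta> > 0 \<longrightarrow> f \<beta> \<in> gen_eigenspace A \<beta>) \<and>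
          v = vec (dim_row A) (\<lambda>i. \<Sum>\<beta>\<in>{\<beta>. eigenvalue A \<beta> \<and> Im \<beta> > 0}. f \<beta> $ i)}"

end

theory Submission imports Defs begin

locale L23 =
  fixes n N :: nat and M :: "int mat" and \<alpha> :: real and a :: "real vec"
    and b :: "nat \<Rightarrow> complex vec" and R :: "complex mat"
  assumes M_carrier: "M \<in> carrier_mat N N"
    and M_det: "det M = 1"
    and alpha_pos: "\<alpha> > 0"
    and a_carrier: "a \<in> carrier_vec N"
    and a_eig: "map_mat real_of_int M *\<^sub>v a = \<alpha> \<cdot>\<^sub>v a"
    and b_carrier: "\<And>j. j < n \<Longrightarrow> b j \<in> carrier_vec N"
    and b_indep: "\<And>c. (\<forall>i<N. (\<Sum>j<n. c j * b j $ i) = 0) \<Longrightarrow> \<forall>j<n. c j = 0"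
    and R_carrier: "R \<in> carrier_mat n n"
    and R_def: "\<And>j i. j < n \<Longrightarrow> i < N \<Longrightarrow> (map_mat complex_of_int M *\<^sub>v b j) $ i = (\<Sum>l<n. R $$ (l, j) * b l $ i)"
begin

definition S where "S = {p :: complex \<times> complex vec. Im (fst p) > 0 \<and> snd p \<in> carrier_vec n}"
definition X :: "(nat \<Rightarrow> int) \<Rightarrow> complex" where
  "X c = complex_of_real (\<Sum>k<N. real_of_int (c k) * a $ k)"
definition Y :: "(nat \<Rightarrow> int) \<Rightarrow> complex vec" where
  "Y c = vec n (\<lambda>j. \<Sum>k<N. of_int (c k) * b j $ k)"
definition T where "T c = (\<lambda>(w, z) \<in> S. (w + X c, z + Y c))"
definition g0 where "g0 = (\<lambda>(w, z) \<in> S. (complex_of_real \<alpha> * w, transpose_mat R *\<^sub>v z))"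
definition cM :: "(nat \<Rightarrow> int) \<Rightarrow> nat \<Rightarrow> int" where
  "cM c = (\<lambda>l. \<Sum>k<N. c k * M $$ (k, l))"

abbreviation "G \<equiv> BijGroup S"

lemma grp: "group G" by (rule group_BijGroup)

lemma X_add: "X (\<lambda>k. c k + d k) = X c + X d"
  by (simp add: X_def distrib_right sum.distrib)

lemma Y_add: "Y (\<lambda>k. c k + d k) = Y c + Y d"
  by (rule eq_vecI) (auto simp: Y_def distrib_right sum.distrib)

lemma Y_carrier: "Y c \<in> carrier_vec n" by (simp add: Y_def)
lemma dim_Y[simp]: "dim_vec (Y c) = n" by (simp add: Y_def)
lemma index_Y[simp]: "j < n \<Longrightarrow> Y c $ j = (\<Sum>k<N. of_int (c k) * b j $ k)" by (simp add: Y_def)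

lemma X_0: "X (\<lambda>_. 0) = 0" by (simp add: X_def)
lemma Y_0: "Y (\<lambda>_. 0) = 0\<^sub>v n" by (rule eq_vecI) (auto simp: Y_def)

lemma T_in: "p \<in> S \<Longrightarrow> T c p \<in> S"
  by (cases p) (auto simp: T_def S_def X_def Y_def)

lemma T_T: "p \<in> S \<Longrightarrow> T c (T d p) = T (\<lambda>k. c k + d k) p"
proof -
  assume p: "p \<in> S"
  obtain w z where pw: "p = (w, z)" by (cases p)
  have z: "z \<in> carrier_vec n" using p pw by (simp add: S_def)
  have "T d p \<in> S" using T_in p .
  then have "T c (T d p) = (w + X d + X c, z + Y d + Y c)"
    using p pw by (simp add: T_def)
  also have "\<dots> = (w + X (\<lambda>k. c k + d k), z + Y (\<lambda>k. c k + d k))"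
    using z by (auto simp: X_add Y_add Y_carrier distrib_left intro!: eq_vecI)
  also have "\<dots> = T (\<lambda>k. c k + d k) p" using p pw by (simp add: T_def)
  finally show ?thesis .
qed

lemma T_0: "p \<in> S \<Longrightarrow> T (\<lambda>_. 0) p = p"
  by (cases p) (auto simp: T_def S_def X_0 Y_0)

lemma T_ext: "T c \<in> extensional S" by (simp add: T_def)

lemma T_mem: "T c \<in> carrier G"
proof -
  have "bij_betw (T c) S S"
  proof (rule bij_betw_byWitness[where f' = "T (\<lambda>k. - c k)"])
    show "\<forall>p\<in>S. T (\<lambda>k. - c k) (T c p) = p" by (simp add: T_T T_0)
    show "\<forall>p\<in>S. T c (T (\<lambda>k. - c k) p) = p" by (simp add: T_T T_0)
  qed (auto simp: T_in)
  then show ?thesis by (simp add: BijGroup_def Bij_def T_ext)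
qed

lemma T_mult: "T c \<otimes>\<^bsub>G\<^esub> T d = T (\<lambda>k. c k + d k)"
proof -
  have "T c \<otimes>\<^bsub>G\<^esub> T d = compose S (T c) (T d)"
    using T_mem by (simp add: BijGroup_def)
  also have "\<dots> = T (\<lambda>k. c k + d k)"
    by (rule ext) (auto simp: compose_def T_T T_def[of "\<lambda>k. c k + d k"])
  finally show ?thesis .
qed

lemma T_one: "\<one>\<^bsub>G\<^esub> = T (\<lambda>_. 0)"
  by (rule ext) (auto simp: BijGroup_def T_def[of "\<lambda>_. 0"] X_0 Y_0 S_def)

lemma T_inv: "inv\<^bsub>G\<^esub> (T c) = T (\<lambda>k. - c k)"
  by (rule group.inv_equality[OF grp]) (auto simp: T_mult T_mem T_one)

lemma T_pow_nat: "T c [^]\<^bsub>G\<^esub> (m::nat) = T (\<lambda>k. int m * c k)"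
  by (induction m) (auto simp: T_one T_mult algebra_simps)

lemma T_pow_int: "T c [^]\<^bsub>G\<^esub> (m::int) = T (\<lambda>k. m * c k)"
  by (auto simp: int_pow_def2 T_pow_nat T_inv)

lemma T_cong: "(\<And>k. k < N \<Longrightarrow> c k = d k) \<Longrightarrow> T c = T d"
  by (simp add: T_def X_def Y_def)


lemma M_dims[simp]: "dim_row M = N" "dim_col M = N" using M_carrier by auto
lemma R_dims[simp]: "dim_row R = n" "dim_col R = n" using R_carrier by auto
lemma a_dim[simp]: "dim_vec a = N" using a_carrier by auto

lemma a_eig': "k < N \<Longrightarrow> (\<Sum>l<N. real_of_int (M $$ (k, l)) * a $ l) = \<alpha> * a $ k"
proof -
  assume k: "k < N"
  have "(map_mat real_of_int M *\<^sub>v a) $ k = (\<alpha> \<cdot>\<^sub>v a) $ k" using a_eig by simp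
  then show ?thesis using k
    by (simp add: scalar_prod_def atLeast0LessThan)
qed

lemma MbR: "j < n \<Longrightarrow> i < N \<Longrightarrow>
  (\<Sum>k<N. complex_of_int (M $$ (i, k)) * b j $ k) = (\<Sum>l<n. R $$ (l, j) * b l $ i)"
proof -
  assume j: "j < n" and i: "i < N"
  have "(map_mat complex_of_int M *\<^sub>v b j) $ i = (\<Sum>k<N. complex_of_int (M $$ (i, k)) * b j $ k)"
    using i b_carrier[OF j] by (simp add: scalar_prod_def atLeast0LessThan)
  then show ?thesis using R_def[OF j i] by simp
qed

lemma XM: "complex_of_real \<alpha> * X c = X (cM c)"
proof -
  have "(\<Sum>l<N. real_of_int (cM c l) * a $ l) = (\<Sum>l<N. \<Sum>k<N. real_of_int (c k) * (real_of_int (M $$ (k, l)) * a $ l))"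
    by (simp add: cM_def sum_distrib_right mult.assoc)
  also have "\<dots> = (\<Sum>k<N. real_of_int (c k) * (\<Sum>l<N. real_of_int (M $$ (k, l)) * a $ l))"
    by (subst sum.swap) (simp add: sum_distrib_left)
  also have "\<dots> = (\<Sum>k<N. real_of_int (c k) * (\<alpha> * a $ k))"
    by (rule sum.cong) (auto simp: a_eig')
  also have "\<dots> = \<alpha> * (\<Sum>k<N. real_of_int (c k) * a $ k)"
    by (simp add: sum_distrib_left algebra_simps)
  finally show ?thesis by (simp add: X_def)
qed

lemma YM: "transpose_mat R *\<^sub>v Y c = Y (cM c)"
proof (rule eq_vecI)
  fix j assume "j < dim_vec (Y (cM c))"
  then have j: "j < n" by simp
  have "(transpose_mat R *\<^sub>v Y c) $ j = (\<Sum>i<n. R $$ (i, j) * (\<Sum>k<N. of_int (c k) * b i $ k))"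
    using j by (simp add: scalar_prod_def atLeast0LessThan)
  also have "\<dots> = (\<Sum>k<N. of_int (c k) * (\<Sum>i<n. R $$ (i, j) * b i $ k))"
    by (simp add: sum_distrib_left algebra_simps) (rule sum.swap)
  also have "\<dots> = (\<Sum>k<N. of_int (c k) * (\<Sum>l<N. complex_of_int (M $$ (k, l)) * b j $ l))"
    by (rule sum.cong) (auto simp: MbR j)
  also have "\<dots> = (\<Sum>l<N. complex_of_int (cM c l) * b j $ l)"
    by (simp add: cM_def sum_distrib_left sum_distrib_right algebra_simps) (rule sum.swap)
  also have "\<dots> = Y (cM c) $ j" using j by simp
  finally show "(transpose_mat R *\<^sub>v Y c) $ j = Y (cM c) $ j" .
qed (simp)


lemma Mc_det: "det (map_mat complex_of_int M) = 1"
  using M_det by (simp add: of_int_hom.hom_det)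

lemma R_inj: assumes v: "v \<in> carrier_vec n" and Rv: "R *\<^sub>v v = 0\<^sub>v n" shows "v = 0\<^sub>v n"
proof -
  define w where "w = vec N (\<lambda>i. \<Sum>j<n. v $ j * b j $ i)"
  have Rv': "l < n \<Longrightarrow> (\<Sum>j<n. R $$ (l, j) * v $ j) = 0" for l
  proof -
    assume l: "l < n"
    have "(R *\<^sub>v v) $ l = 0" using Rv l by simp
    then show ?thesis using l v by (simp add: scalar_prod_def atLeast0LessThan)
  qed
  have "map_mat complex_of_int M *\<^sub>v w = 0\<^sub>v N"
  proof (rule eq_vecI)
    fix i assume "i < dim_vec (0\<^sub>v N :: complex vec)"
    then have i: "i < N" by simp
    have "(map_mat complex_of_int M *\<^sub>v w) $ i = (\<Sum>k<N. of_int (M $$ (i, k)) * (\<Sum>j<n. v $ j * b j $ k))"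
      using i by (simp add: w_def scalar_prod_def atLeast0LessThan)
    also have "\<dots> = (\<Sum>j<n. v $ j * (\<Sum>k<N. of_int (M $$ (i, k)) * b j $ k))"
      by (simp add: sum_distrib_left algebra_simps) (rule sum.swap)
    also have "\<dots> = (\<Sum>j<n. v $ j * (\<Sum>l<n. R $$ (l, j) * b l $ i))"
      by (rule sum.cong) (auto simp: MbR i)
    also have "\<dots> = (\<Sum>l<n. (\<Sum>j<n. R $$ (l, j) * v $ j) * b l $ i)"
      by (simp add: sum_distrib_left sum_distrib_right algebra_simps) (rule sum.swap)
    also have "\<dots> = 0" by (simp add: Rv')
    finally show "(map_mat complex_of_int M *\<^sub>v w) $ i = 0\<^sub>v N $ i" using i by simp
  qed (simp)
  moreover have "w \<in> carrier_vec N" by (simp add: w_def)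
  ultimately have "w = 0\<^sub>v N"
    using det_0_iff_vec_prod_zero_field[of "map_mat complex_of_int M" N] Mc_det M_carrier by auto
  then have "\<forall>i<N. (\<Sum>j<n. v $ j * b j $ i) = 0"
    proof (intro allI impI)
    fix i assume i: "i < N"
    have "w $ i = 0" using i `w = 0\<^sub>v N` by simp
    then show "(\<Sum>j<n. v $ j * b j $ i) = 0" using i by (simp add: w_def)
  qed
  then have "\<forall>j<n. v $ j = 0" by (rule b_indep)
  then show ?thesis using v by (auto intro!: eq_vecI)
qed

lemma R_det: "det R \<noteq> 0"
  using det_0_iff_vec_prod_zero_field[OF R_carrier] R_inj by auto

definition Bi where "Bi = (1 / det (transpose_mat R)) \<cdot>\<^sub>m adj_mat (transpose_mat R)"

lemma Rt_carrier: "transpose_mat R \<in> carrier_mat n n" using R_carrier by simp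
lemma Bi_carrier: "Bi \<in> carrier_mat n n" using adj_mat(1)[OF Rt_carrier] by (simp add: Bi_def)
lemma Bi_left: "Bi * transpose_mat R = 1\<^sub>m n"
proof -
  have d: "det (transpose_mat R) \<noteq> 0" using R_det det_transpose[OF R_carrier] by simp
  have "Bi * transpose_mat R = (1 / det (transpose_mat R)) \<cdot>\<^sub>m (adj_mat (transpose_mat R) * transpose_mat R)"
    unfolding Bi_def using adj_mat(1)[OF Rt_carrier] Rt_carrier by (simp add: mult_smult_assoc_mat)
  also have "\<dots> = 1\<^sub>m n" using adj_mat(3)[OF Rt_carrier] d by (auto intro!: eq_matI)
  finally show ?thesis .
qed
lemma Bi_right: "transpose_mat R * Bi = 1\<^sub>m n"
proof -
  have d: "det (transpose_mat R) \<noteq> 0" using R_det det_transpose[OF R_carrier] by simp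
  have "transpose_mat R * Bi = (1 / det (transpose_mat R)) \<cdot>\<^sub>m (transpose_mat R * adj_mat (transpose_mat R))"
    unfolding Bi_def using adj_mat(1)[OF Rt_carrier] Rt_carrier by (simp add: mult_smult_distrib)
  also have "\<dots> = 1\<^sub>m n" using adj_mat(2)[OF Rt_carrier] d by (auto intro!: eq_matI)
  finally show ?thesis .
qed

lemma g0_in: "p \<in> S \<Longrightarrow> g0 p \<in> S"
  using alpha_pos Rt_carrier by (cases p) (auto simp: g0_def S_def)

lemma g0_mem: "g0 \<in> carrier G"
proof -
  define h where "h = (\<lambda>(w, z) \<in> S. (w / complex_of_real \<alpha>, Bi *\<^sub>v z))"
  have "bij_betw g0 S S"
  proof (rule bij_betw_byWitness[where f' = h])
    show "\<forall>p\<in>S. h (g0 p) = p"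
    proof
      fix p assume p: "p \<in> S"
      obtain w z where pw: "p = (w, z)" by (cases p)
      have z: "z \<in> carrier_vec n" using p pw by (simp add: S_def)
      have "Bi *\<^sub>v (transpose_mat R *\<^sub>v z) = z"
        using z Bi_carrier Rt_carrier
        by (metis Bi_left assoc_mult_mat_vec one_mult_mat_vec)
      then show "h (g0 p) = p" using g0_in[OF p] p pw alpha_pos by (simp add: h_def g0_def)
    qed
    show "\<forall>p\<in>S. g0 (h p) = p"
    proof
      fix p assume p: "p \<in> S"
      obtain w z where pw: "p = (w, z)" by (cases p)
      have z: "z \<in> carrier_vec n" using p pw by (simp add: S_def)
      have "transpose_mat R *\<^sub>v (Bi *\<^sub>v z) = z"
        using z Bi_carrier Rt_carrier
        by (metis Bi_right assoc_mult_mat_vec one_mult_mat_vec)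
      moreover have "h p \<in> S" using p pw z alpha_pos Bi_carrier
        by (auto simp: h_def S_def)
      ultimately show "g0 (h p) = p" using p pw alpha_pos by (simp add: h_def g0_def)
    qed
    show "g0 ` S \<subseteq> S" using g0_in by auto
    show "h ` S \<subseteq> S" using alpha_pos Bi_carrier by (auto simp: h_def S_def)
  qed
  then show ?thesis by (simp add: BijGroup_def Bij_def g0_def)
qed


lemma g0_T: "g0 \<otimes>\<^bsub>G\<^esub> T c = T (cM c) \<otimes>\<^bsub>G\<^esub> g0"
proof -
  have "g0 \<otimes>\<^bsub>G\<^esub> T c = compose S g0 (T c)"
    using T_mem g0_mem by (simp add: BijGroup_def)
  also have "\<dots> = compose S (T (cM c)) g0"
  proof (rule ext)
    fix p show "compose S g0 (T c) p = compose S (T (cM c)) g0 p"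
    proof (cases "p \<in> S")
      case True
      obtain w z where pw: "p = (w, z)" by (cases p)
      have z: "z \<in> carrier_vec n" using True pw by (simp add: S_def)
      have "g0 (T c p) = (complex_of_real \<alpha> * (w + X c), transpose_mat R *\<^sub>v (z + Y c))"
        using T_in[OF True] True pw by (simp add: g0_def T_def)
      also have "\<dots> = (complex_of_real \<alpha> * w + X (cM c), transpose_mat R *\<^sub>v z + Y (cM c))"
        using z Rt_carrier Y_carrier
        by (simp add: distrib_left XM[symmetric] YM[symmetric] mult_add_distrib_mat_vec[of _ n n])
      also have "\<dots> = T (cM c) (g0 p)"
        using g0_in[OF True] True pw by (simp add: g0_def T_def)
      finally show ?thesis using True by (simp add: compose_def)
    qed (simp add: compose_def)
  qed
  also have "\<dots> = T (cM c) \<otimes>\<^bsub>G\<^esub> g0"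
    using T_mem g0_mem by (simp add: BijGroup_def)
  finally show ?thesis .
qed

lemma g0_conj: "g0 \<otimes>\<^bsub>G\<^esub> T c \<otimes>\<^bsub>G\<^esub> inv\<^bsub>G\<^esub> g0 = T (cM c)"
proof -
  interpret group G by (rule grp)
  show ?thesis using g0_T m_assoc r_inv g0_mem T_mem by (metis inv_closed r_one)
qed

lemma g0_conj_inv: "inv\<^bsub>G\<^esub> g0 \<otimes>\<^bsub>G\<^esub> T (cM d) \<otimes>\<^bsub>G\<^esub> g0 = T d"
proof -
  interpret group G by (rule grp)
  have "inv\<^bsub>G\<^esub> g0 \<otimes>\<^bsub>G\<^esub> T (cM d) \<otimes>\<^bsub>G\<^esub> g0 = inv\<^bsub>G\<^esub> g0 \<otimes>\<^bsub>G\<^esub> (g0 \<otimes>\<^bsub>G\<^esub> T d)"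
    using g0_T m_assoc g0_mem T_mem inv_closed by metis
  also have "\<dots> = T d"
    using m_assoc g0_mem T_mem inv_closed l_inv l_one by metis
  finally show ?thesis .
qed

lemma cM_surj: "\<exists>d. T c = T (cM d)"
proof -
  define A where "A = adj_mat M"
  have A: "A \<in> carrier_mat N N" "A * M = 1\<^sub>m N" using adj_mat[OF M_carrier] M_det by (auto simp: A_def)
  define d where "d = (\<lambda>k. \<Sum>j<N. c j * A $$ (j, k))"
  have "cM d l = c l" if l: "l < N" for l
  proof -
    have "cM d l = (\<Sum>j<N. c j * (\<Sum>k<N. A $$ (j, k) * M $$ (k, l)))"
      by (simp add: cM_def d_def sum_distrib_left sum_distrib_right algebra_simps) (rule sum.swap)
    also have "\<dots> = (\<Sum>j<N. c j * (if j = l then 1 else 0))"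
    proof (rule sum.cong)
      fix j assume "j \<in> {..<N}"
      then have j: "j < N" by simp
      have "(A * M) $$ (j, l) = (1\<^sub>m N) $$ (j, l)" by (simp only: A(2))
      then show "c j * (\<Sum>k<N. A $$ (j, k) * M $$ (k, l)) = c j * (if j = l then 1 else 0)"
        using j l A(1) by (simp add: scalar_prod_def atLeast0LessThan)
    qed simp
    also have "\<dots> = c l" using l by (simp add: if_distrib cong: if_cong)
    finally show ?thesis .
  qed
  then show ?thesis by (intro exI[of _ d] T_cong) simp
qed

definition \<delta> :: "nat \<Rightarrow> nat \<Rightarrow> int" where "\<delta> i = (\<lambda>k. if k = i then 1 else 0)"

lemma cM_delta: "i < N \<Longrightarrow> cM (\<delta> i) = (\<lambda>l. M $$ (i, l))"
proof -
  have e: "\<And>k l. (if k = i then 1 else 0) * M $$ (k, l) = (if k = i then M $$ (k, l) else 0)" by simp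
  assume "i < N" then show ?thesis by (auto simp: cM_def \<delta>_def e)
qed

lemma foldr_T: "(\<forall>k\<in>set xs. gg k = T (\<delta> k)) \<Longrightarrow>
  foldr (\<lambda>k acc. (gg k [^]\<^bsub>G\<^esub> (f k :: int)) \<otimes>\<^bsub>G\<^esub> acc) xs \<one>\<^bsub>G\<^esub>
   = T (\<lambda>l. sum_list (map (\<lambda>k. if k = l then f k else 0) xs))"
proof (induction xs)
  case Nil then show ?case by (simp add: T_one)
next
  case (Cons k xs)
  then show ?case
    by (simp add: T_pow_int T_mult) (rule arg_cong[where f = T], auto simp: \<delta>_def)
qed

lemma foldr_T_upt: "(\<forall>k<N. gg k = T (\<delta> k)) \<Longrightarrow>
  foldr (\<lambda>k acc. (gg k [^]\<^bsub>G\<^esub> (f k :: int)) \<otimes>\<^bsub>G\<^esub> acc) [0..<N] \<one>\<^bsub>G\<^esub> = T f"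
proof -
  assume h: "\<forall>k<N. gg k = T (\<delta> k)"
  have "foldr (\<lambda>k acc. (gg k [^]\<^bsub>G\<^esub> (f k :: int)) \<otimes>\<^bsub>G\<^esub> acc) [0..<N] \<one>\<^bsub>G\<^esub>
     = T (\<lambda>l. sum_list (map (\<lambda>k. if k = l then f k else 0) [0..<N]))"
    using h by (intro foldr_T) auto
  also have "\<dots> = T f"
    by (rule T_cong) (simp add: sum_list_sum_nth atLeast0LessThan cong: if_cong)
  finally show ?thesis .
qed


lemma rangeT_sub: "subgroup (range T) G"
proof -
  interpret group G by (rule grp)
  show ?thesis
  proof (rule subgroupI)
    show "range T \<subseteq> carrier G" using T_mem by auto
    show "range T \<noteq> {}" by simp
    show "\<And>x. x \<in> range T \<Longrightarrow> inv\<^bsub>G\<^esub> x \<in> range T" by (auto simp: T_inv)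
    show "\<And>x y. x \<in> range T \<Longrightarrow> y \<in> range T \<Longrightarrow> x \<otimes>\<^bsub>G\<^esub> y \<in> range T" by (auto simp: T_mult)
  qed
qed

lemma gen_eq: "generate G ((\<lambda>k. T (\<delta> k)) ` {..<N}) = range T"
proof -
  interpret group G by (rule grp)
  let ?E = "(\<lambda>k. T (\<delta> k)) ` {..<N}"
  have sub: "subgroup (generate G ?E) G" by (rule generate_is_subgroup) (auto simp: T_mem)
  show ?thesis
  proof
    show "generate G ?E \<subseteq> range T" by (rule generate_subgroup_incl[OF _ rangeT_sub]) auto
    show "range T \<subseteq> generate G ?E"
    proof
      fix x assume "x \<in> range T"
      then obtain f where x: "x = T f" by auto
      have fo: "\<And>xs. set xs \<subseteq> {..<N} \<Longrightarrow>
          foldr (\<lambda>k acc. (T (\<delta> k) [^]\<^bsub>G\<^esub> (f k :: int)) \<otimes>\<^bsub>G\<^esub> acc) xs \<one>\<^bsub>G\<^esub> \<in> generate G ?E"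
      proof -
        fix xs :: "nat list" assume "set xs \<subseteq> {..<N}"
        then show "foldr (\<lambda>k acc. (T (\<delta> k) [^]\<^bsub>G\<^esub> (f k :: int)) \<otimes>\<^bsub>G\<^esub> acc) xs \<one>\<^bsub>G\<^esub> \<in> generate G ?E"
        proof (induction xs)
          case Nil then show ?case using subgroup.one_closed[OF sub] by simp
        next
          case (Cons k xs)
          then have "T (\<delta> k) \<in> generate G ?E" by (auto intro: generate.incl)
          then have "T (\<delta> k) [^]\<^bsub>G\<^esub> (f k) \<in> generate G ?E"
            by (rule subgroup_int_pow_closed[OF sub])
          then show ?case using Cons subgroup.m_closed[OF sub] by simp
        qed
      qed
      have "x = foldr (\<lambda>k acc. (T (\<delta> k) [^]\<^bsub>G\<^esub> (f k :: int)) \<otimes>\<^bsub>G\<^esub> acc) [0..<N] \<one>\<^bsub>G\<^esub>"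
        using x by (simp add: foldr_T_upt)
      moreover have "set [0..<N] \<subseteq> {..<N}" by auto
      ultimately show "x \<in> generate G ?E" using fo[of "[0..<N]"] by simp
    qed
  qed
qed

lemma normal_part: "range T \<lhd> G\<lparr>carrier := generate G (insert g0 ((\<lambda>k. T (\<delta> k)) ` {..<N}))\<rparr>"
proof -
  interpret group G by (rule grp)
  let ?E = "(\<lambda>k. T (\<delta> k)) ` {..<N}"
  let ?K = "generate G (insert g0 ?E)"
  define Nz where "Nz = {x \<in> carrier G. (\<forall>c. \<exists>d. x \<otimes>\<^bsub>G\<^esub> T c \<otimes>\<^bsub>G\<^esub> inv\<^bsub>G\<^esub> x = T d) \<and> (\<forall>c. \<exists>d. inv\<^bsub>G\<^esub> x \<otimes>\<^bsub>G\<^esub> T c \<otimes>\<^bsub>G\<^esub> x = T d)}"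
  have Nz_sub: "subgroup Nz G"
  proof (rule subgroupI)
    show "Nz \<subseteq> carrier G" by (auto simp: Nz_def)
    show "Nz \<noteq> {}" using T_mem by (auto simp: Nz_def intro!: exI[of _ "\<one>\<^bsub>G\<^esub>"])
    show "inv\<^bsub>G\<^esub> x \<in> Nz" if "x \<in> Nz" for x using that by (auto simp: Nz_def)
    show "x \<otimes>\<^bsub>G\<^esub> y \<in> Nz" if x: "x \<in> Nz" and y: "y \<in> Nz" for x y
    proof -
      have xc: "x \<in> carrier G" and yc: "y \<in> carrier G" using x y by (auto simp: Nz_def)
      have "\<exists>d. x \<otimes>\<^bsub>G\<^esub> y \<otimes>\<^bsub>G\<^esub> T c \<otimes>\<^bsub>G\<^esub> inv\<^bsub>G\<^esub> (x \<otimes>\<^bsub>G\<^esub> y) = T d" for c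
      proof -
        obtain d1 where d1: "y \<otimes>\<^bsub>G\<^esub> T c \<otimes>\<^bsub>G\<^esub> inv\<^bsub>G\<^esub> y = T d1" using y by (auto simp: Nz_def)
        obtain d2 where d2: "x \<otimes>\<^bsub>G\<^esub> T d1 \<otimes>\<^bsub>G\<^esub> inv\<^bsub>G\<^esub> x = T d2" using x by (auto simp: Nz_def)
        have "x \<otimes>\<^bsub>G\<^esub> y \<otimes>\<^bsub>G\<^esub> T c \<otimes>\<^bsub>G\<^esub> inv\<^bsub>G\<^esub> (x \<otimes>\<^bsub>G\<^esub> y) = x \<otimes>\<^bsub>G\<^esub> (y \<otimes>\<^bsub>G\<^esub> T c \<otimes>\<^bsub>G\<^esub> inv\<^bsub>G\<^esub> y) \<otimes>\<^bsub>G\<^esub> inv\<^bsub>G\<^esub> x"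
          using xc yc T_mem by (simp add: inv_mult_group m_assoc)
        then show ?thesis using d1 d2 by auto
      qed
      moreover have "\<exists>d. inv\<^bsub>G\<^esub> (x \<otimes>\<^bsub>G\<^esub> y) \<otimes>\<^bsub>G\<^esub> T c \<otimes>\<^bsub>G\<^esub> (x \<otimes>\<^bsub>G\<^esub> y) = T d" for c
      proof -
        obtain d1 where d1: "inv\<^bsub>G\<^esub> x \<otimes>\<^bsub>G\<^esub> T c \<otimes>\<^bsub>G\<^esub> x = T d1" using x by (auto simp: Nz_def)
        obtain d2 where d2: "inv\<^bsub>G\<^esub> y \<otimes>\<^bsub>G\<^esub> T d1 \<otimes>\<^bsub>G\<^esub> y = T d2" using y by (auto simp: Nz_def)
        have "inv\<^bsub>G\<^esub> (x \<otimes>\<^bsub>G\<^esub> y) \<otimes>\<^bsub>G\<^esub> T c \<otimes>\<^bsub>G\<^esub> (x \<otimes>\<^bsub>G\<^esub> y) = inv\<^bsub>G\<^esub> y \<otimes>\<^bsub>G\<^esub> (inv\<^bsub>G\<^esub> x \<otimes>\<^bsub>G\<^esub> T c \<otimes>\<^bsub>G\<^esub> x) \<otimes>\<^bsub>G\<^esub> y"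
          using xc yc T_mem by (simp add: inv_mult_group m_assoc)
        then show ?thesis using d1 d2 by auto
      qed
      ultimately show ?thesis using xc yc by (auto simp: Nz_def)
    qed
  qed
  have gens: "insert g0 ?E \<subseteq> Nz"
  proof
    fix x assume "x \<in> insert g0 ?E"
    then show "x \<in> Nz"
    proof
      assume x: "x = g0"
      have "\<exists>d. inv\<^bsub>G\<^esub> g0 \<otimes>\<^bsub>G\<^esub> T c \<otimes>\<^bsub>G\<^esub> g0 = T d" for c
        using cM_surj[of c] g0_conj_inv by metis
      then show ?thesis using x g0_mem g0_conj by (auto simp: Nz_def)
    next
      assume "x \<in> ?E"
      then obtain e where x: "x = T e" by auto
      show ?thesis using x T_mem by (auto simp: Nz_def T_inv T_mult)
    qed
  qed
  have KN: "?K \<subseteq> Nz" by (rule generate_subgroup_incl[OF gens Nz_sub])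
  have Ksub: "subgroup ?K G" by (rule generate_is_subgroup) (use T_mem g0_mem in auto)
  have TK: "range T \<subseteq> ?K" using gen_eq mono_generate[of ?E "insert g0 ?E"] by auto
  interpret K: group "G\<lparr>carrier := ?K\<rparr>" by (rule subgroup.subgroup_is_group[OF Ksub grp])
  show ?thesis
  proof (rule K.normal_invI)
    show "subgroup (range T) (G\<lparr>carrier := ?K\<rparr>)" by (rule subgroup_incl[OF rangeT_sub Ksub TK])
    fix x h assume x: "x \<in> carrier (G\<lparr>carrier := ?K\<rparr>)" and h: "h \<in> range T"
    then have xK: "x \<in> ?K" by simp
    then have "x \<in> Nz" using KN by auto
    then show "x \<otimes>\<^bsub>G\<lparr>carrier := ?K\<rparr>\<^esub> h \<otimes>\<^bsub>G\<lparr>carrier := ?K\<rparr>\<^esub> inv\<^bsub>G\<lparr>carrier := ?K\<rparr>\<^esub> x \<in> range T"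
      using h m_inv_consistent[OF Ksub xK] by (auto simp: Nz_def) (metis rangeI)
  qed
qed

end
theorem lemma2p3:
  fixes n :: nat and M :: "int mat" and \<alpha> :: real and a :: "real vec"
    and b :: "nat \<Rightarrow> complex vec" and R :: "complex mat"
  defines "N \<equiv> 2 * n + 1"
  defines "Mc \<equiv> map_mat complex_of_int M"
  defines "S \<equiv> {p :: complex \<times> complex vec. Im (fst p) > 0 \<and> snd p \<in> carrier_vec n}"
  defines "g0 \<equiv> (\<lambda>(w, z) \<in> S. (complex_of_real \<alpha> * w, transpose_mat R *\<^sub>v z))"
  defines "u \<equiv> (\<lambda>i. (complex_of_real (a $ i), vec n (\<lambda>j. b j $ i)))"
  defines "g \<equiv> (\<lambda>i. (\<lambda>(w, z) \<in> S. (w + fst (u i), z + snd (u i))))"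
  defines "G \<equiv> BijGroup S"
  assumes n_pos: "n \<ge> 1"
    and M_carrier: "M \<in> carrier_mat N N"
    and M_det: "det M = 1"
    and alpha_eig: "eigenvalue Mc (complex_of_real \<alpha>)"
    and only_real_eig: "\<And>\<mu>. eigenvalue Mc \<mu> \<Longrightarrow> Im \<mu> = 0 \<Longrightarrow> \<mu> = complex_of_real \<alpha>"
    and alpha_pos: "\<alpha> > 0" and alpha_ne1: "\<alpha> \<noteq> 1"
    and alpha_simple: "Polynomial.order (complex_of_real \<alpha>) (char_poly Mc) = 1"
    and a_carrier: "a \<in> carrier_vec N" and a_nz: "a \<noteq> 0\<^sub>v N"
    and a_eig: "map_mat real_of_int M *\<^sub>v a = \<alpha> \<cdot>\<^sub>v a"
    and b_in_W: "\<And>j. j < n \<Longrightarrow> b j \<in> upper_gen_eigensum Mc"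
    and b_indep: "\<And>c. (\<forall>i<N. (\<Sum>j<n. c j * b j $ i) = 0) \<Longrightarrow> \<forall>j<n. c j = 0"
    and b_span: "\<And>v. v \<in> upper_gen_eigensum Mc \<Longrightarrow>
                    \<exists>c. v = vec N (\<lambda>i. \<Sum>j<n. c j * b j $ i)"
    and R_carrier: "R \<in> carrier_mat n n"
    and R_def: "\<And>j i. j < n \<Longrightarrow> i < N \<Longrightarrow> (Mc *\<^sub>v b j) $ i = (\<Sum>l<n. R $$ (l, j) * b l $ i)"
  shows "(\<forall>i<N. g0 \<otimes>\<^bsub>G\<^esub> g i \<otimes>\<^bsub>G\<^esub> inv\<^bsub>G\<^esub> g0 =
            foldr (\<lambda>k acc. (g k [^]\<^bsub>G\<^esub> (M $$ (i, k))) \<otimes>\<^bsub>G\<^esub> acc) [0..<N] \<one>\<^bsub>G\<^esub>)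
         \<and> generate G (g ` {..<N}) \<lhd> G\<lparr>carrier := generate G (insert g0 (g ` {..<N}))\<rparr>"
proof -
  have bc: "b j \<in> carrier_vec N" if j: "j < n" for j
  proof -
    from b_in_W[OF j] obtain f where "b j = vec (dim_row Mc) f" by (auto simp: upper_gen_eigensum_def)
    then show ?thesis using M_carrier by (simp add: Mc_def)
  qed
  interpret L: L23 n N M \<alpha> a b R
    by (unfold_locales) (use M_carrier M_det alpha_pos a_carrier a_eig bc b_indep R_carrier R_def in \<open>auto simp: Mc_def\<close>)
  have SS: "S = L.S" by (simp add: S_def L.S_def)
  have GG: "G = BijGroup L.S" by (simp add: G_def SS)
  have g00: "g0 = L.g0" by (simp add: g0_def L.g0_def SS)
  have gT: "g i = L.T (L.\<delta> i)" if i: "i < N" for i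
  proof -
    have f1: "\<And>k x. real_of_int (if k = i then 1 else 0) * x = (if k = i then x else 0)" by simp
    have f2: "\<And>k x. complex_of_int (if k = i then 1 else 0) * x = (if k = i then x else 0)" by simp
    have e1: "(\<Sum>k<N. real_of_int (if k = i then 1 else 0) * a $ k) = a $ i" using i
      by (simp only: f1) simp
    have e2: "(\<Sum>k<N. complex_of_int (if k = i then 1 else 0) * b j $ k) = b j $ i" for j using i
      by (simp only: f2) simp
    show ?thesis
      by (simp add: g_def u_def L.T_def L.X_def L.Y_def L.\<delta>_def SS e1 e2)
  qed
  have p1: "g0 \<otimes>\<^bsub>G\<^esub> g i \<otimes>\<^bsub>G\<^esub> inv\<^bsub>G\<^esub> g0 =
            foldr (\<lambda>k acc. (g k [^]\<^bsub>G\<^esub> (M $$ (i, k))) \<otimes>\<^bsub>G\<^esub> acc) [0..<N] \<one>\<^bsub>G\<^esub>" if i: "i < N" for i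
  proof -
    have "g0 \<otimes>\<^bsub>G\<^esub> g i \<otimes>\<^bsub>G\<^esub> inv\<^bsub>G\<^esub> g0 = L.T (L.cM (L.\<delta> i))"
      using L.g0_conj by (simp add: GG g00 gT i)
    also have "\<dots> = L.T (\<lambda>k. M $$ (i, k))" by (simp add: L.cM_delta i)
    also have "\<dots> = foldr (\<lambda>k acc. (g k [^]\<^bsub>G\<^esub> (M $$ (i, k))) \<otimes>\<^bsub>G\<^esub> acc) [0..<N] \<one>\<^bsub>G\<^esub>"
      unfolding GG by (rule L.foldr_T_upt[symmetric]) (simp add: gT)
    finally show ?thesis .
  qed
  have im: "g ` {..<N} = (\<lambda>k. L.T (L.\<delta> k)) ` {..<N}" by (rule image_cong) (auto simp: gT)
  show ?thesis using p1 L.gen_eq L.normal_part by (simp add: im GG g00)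
qed

end
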